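(* Let $G$ be a group and $(A,B)$ a VH-structure in $G$. Let $S_{A,B}$ be the square complex with a single vertex $x$, oriented edge set $A\sqcup B$ with orientation reversal $e\mapsto e^{-1}$, and with one square for each relation $ab = b'a'$ in $G$ with $a,a'\in A$, $b,b'\in B$, namely the square given by the 4-tuple $(a,b,a'^{-1},b'^{-1})$, where the four 4-tuples $(a,b,a'^{-1},b'^{-1})$, $(a',b^{-1},a^{-1},b')$, $(a^{-1},b',a',b^{-1})$, $(a'^{-1},b'^{-1},a,b)$ (coming from the equivalent relations $a'b^{-1}=b'^{-1}a$, $a^{-1}b'=ba'^{-1}$, $a'^{-1}b'^{-1}=b^{-1}a^{-1}$) define the same square. Then the link $\mathrm{Lk}_x$ of $S_{A,B}$ at $x$ is the complete bipartite graph with one class of vertices labelled by $A$ and the other labelled by $B$.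
   Context: A VH-structure in a group $G$ is an ordered pair $(A,B)$ of finite subsets of $G$ such that: (1) taking inverses induces fixed-point-free involutions on $A$ and on $B$; (2) $A\cup B$ generates $G$; (3) the product sets $AB$ and $BA$ have size $\#A\cdot\#B$ and $AB=BA$; (4) $AB$ and $BA$ contain no elements of order $2$. The link $\mathrm{Lk}_x$ at a vertex $x$ of a square complex is the (multi-)graph whose vertices are the oriented edges originating at $x$ and whose edges joining $a,b$ are the corners of squares at $x$ containing the edges $a$ and $b$. *)

theory Defs
  imports "HOL-Algebra.Algebra" "HOL-Library.Multiset"
begin

definition VH_structure :: "('a, 'b) monoid_scheme \<Rightarrow> 'a set \<Rightarrow> 'a set \<Rightarrow> bool" where
  "VH_structure G A B \<longleftrightarrow>
     finite A \<and> finite B \<and> A \<subseteq> carrier G \<and> B \<subseteq> carrier G \<and>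
     (\<forall>a\<in>A. inv\<^bsub>G\<^esub> a \<in> A \<and> inv\<^bsub>G\<^esub> a \<noteq> a) \<and>
     (\<forall>b\<in>B. inv\<^bsub>G\<^esub> b \<in> B \<and> inv\<^bsub>G\<^esub> b \<noteq> b) \<and>
     generate G (A \<union> B) = carrier G \<and>
     card (A <#>\<^bsub>G\<^esub> B) = card A * card B \<and>
     card (B <#>\<^bsub>G\<^esub> A) = card A * card B \<and>
     A <#>\<^bsub>G\<^esub> B = B <#>\<^bsub>G\<^esub> A \<and>
     (\<forall>g \<in> A <#>\<^bsub>G\<^esub> B. group.ord G g \<noteq> 2) \<and>
     (\<forall>g \<in> B <#>\<^bsub>G\<^esub> A. group.ord G g \<noteq> 2)"

(* Oriented edges of S_{A,B}: the disjoint union A \<squnion> B, encoded as Inl a / Inr b *)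
fun edge_rev :: "('a, 'b) monoid_scheme \<Rightarrow> 'a + 'a \<Rightarrow> 'a + 'a" where
  "edge_rev G (Inl a) = Inl (inv\<^bsub>G\<^esub> a)"
| "edge_rev G (Inr b) = Inr (inv\<^bsub>G\<^esub> b)"

type_synonym 'e tuple4 = "'e \<times> 'e \<times> 'e \<times> 'e"

definition rel_tuple :: "('a, 'b) monoid_scheme \<Rightarrow> 'a \<Rightarrow> 'a \<Rightarrow> 'a \<Rightarrow> 'a \<Rightarrow> ('a + 'a) tuple4" where
  "rel_tuple G a b a' b' = (Inl a, Inr b, Inl (inv\<^bsub>G\<^esub> a'), Inr (inv\<^bsub>G\<^esub> b'))"

(* The square of the relation a b = b' a': the set of its four defining 4-tuples *)
definition rel_square :: "('a, 'b) monoid_scheme \<Rightarrow> 'a \<Rightarrow> 'a \<Rightarrow> 'a \<Rightarrow> 'a \<Rightarrow> ('a + 'a) tuple4 set" where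
  "rel_square G a b a' b' =
     {rel_tuple G a b a' b',
      (Inl a', Inr (inv\<^bsub>G\<^esub> b), Inl (inv\<^bsub>G\<^esub> a), Inr b'),
      (Inl (inv\<^bsub>G\<^esub> a), Inr b', Inl a', Inr (inv\<^bsub>G\<^esub> b)),
      (Inl (inv\<^bsub>G\<^esub> a'), Inr (inv\<^bsub>G\<^esub> b'), Inl a, Inr b)}"

definition SAB_squares :: "('a, 'b) monoid_scheme \<Rightarrow> 'a set \<Rightarrow> 'a set \<Rightarrow> ('a + 'a) tuple4 set set" where
  "SAB_squares G A B =
     {rel_square G a b a' b' | a b a' b'.
        a \<in> A \<and> a' \<in> A \<and> b \<in> B \<and> b' \<in> B \<and> a \<otimes>\<^bsub>G\<^esub> b = b' \<otimes>\<^bsub>G\<^esub> a'}"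

(* Corners of a square with boundary path (e1,e2,e3,e4): the corner between e_i and e_(i+1)
   contains the oriented edges e_i^-1 and e_(i+1) originating at that corner;
   each corner is a link edge, recorded by its 2-element multiset of endpoints. *)
fun tuple_corners :: "('a, 'b) monoid_scheme \<Rightarrow> ('a + 'a) tuple4 \<Rightarrow> ('a + 'a) multiset multiset" where
  "tuple_corners G (e1, e2, e3, e4) =
     {# {#edge_rev G e1, e2#}, {#edge_rev G e2, e3#}, {#edge_rev G e3, e4#}, {#edge_rev G e4, e1#} #}"

(* The link Lk_x of S_{A,B} at its unique vertex x, as a multigraph:
   (vertex set, multiset of edges, each edge given by its multiset of endpoints) *)
definition SAB_link :: "('a, 'b) monoid_scheme \<Rightarrow> 'a set \<Rightarrow> 'a set
     \<Rightarrow> ('a + 'a) set \<times> ('a + 'a) multiset multiset" where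
  "SAB_link G A B =
     (Inl ` A \<union> Inr ` B,
      \<Sum>s\<in>SAB_squares G A B. tuple_corners G (SOME t. t \<in> s))"

definition complete_bipartite :: "'a set \<Rightarrow> 'a set \<Rightarrow> ('a + 'a) set \<times> ('a + 'a) multiset multiset" where
  "complete_bipartite A B =
     (Inl ` A \<union> Inr ` B, mset_set {{#Inl a, Inr b#} | a b. a \<in> A \<and> b \<in> B})"

end

theory Submission
  imports Defs
begin

lemma (in group) mult_inj_card:
  assumes "finite P" "finite Q" "P \<subseteq> carrier G" "Q \<subseteq> carrier G"
    "card (P <#> Q) = card P * card Q"
  shows "inj_on (\<lambda>(x,y). x \<otimes> y) (P \<times> Q)"
proof -
  have "P <#> Q = (\<lambda>(x,y). x \<otimes> y) ` (P \<times> Q)" unfolding set_mult_def by auto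
  then show ?thesis using assms
    by (intro eq_card_imp_inj_on) (auto simp: card_cartesian_product)
qed

lemma (in group) main:
  assumes VH: "VH_structure G A B"
  shows "SAB_link G A B = complete_bipartite A B"
proof -
  from VH have fA: "finite A" and fB: "finite B" and AG: "A \<subseteq> carrier G" and BG: "B \<subseteq> carrier G"
    and invA: "\<And>a. a \<in> A \<Longrightarrow> inv a \<in> A \<and> inv a \<noteq> a"
    and invB: "\<And>b. b \<in> B \<Longrightarrow> inv b \<in> B \<and> inv b \<noteq> b"
    and cAB: "card (A <#> B) = card A * card B"
    and cBA: "card (B <#> A) = card B * card A"
    and eqAB: "A <#> B = B <#> A"
    and ordAB: "\<And>g. g \<in> A <#> B \<Longrightarrow> ord g \<noteq> 2"
    unfolding VH_structure_def by (auto simp: mult.commute)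
  have injAB: "inj_on (\<lambda>(x,y). x \<otimes> y) (A \<times> B)"
    using mult_inj_card[OF fA fB AG BG cAB] .
  have injBA: "inj_on (\<lambda>(x,y). x \<otimes> y) (B \<times> A)"
    using mult_inj_card[OF fB fA BG AG cBA] .
  define Rel where "Rel = {(a,b,a',b'). a \<in> A \<and> b \<in> B \<and> a' \<in> A \<and> b' \<in> B \<and> a \<otimes> b = b' \<otimes> a'}"
  have U: "a1 = a2 \<and> b1 = b2" if "(a,b,a1,b1) \<in> Rel" "(a,b,a2,b2) \<in> Rel" for a b a1 b1 a2 b2
  proof -
    have "(b1,a1) \<in> B \<times> A" "(b2,a2) \<in> B \<times> A" "b1 \<otimes> a1 = b2 \<otimes> a2"
      using that unfolding Rel_def by auto
    then have "(b1,a1) = (b2,a2)" using injBA unfolding inj_on_def by fastforce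
    then show ?thesis by simp
  qed
  have Ex: "\<exists>a' b'. (a,b,a',b') \<in> Rel" if "a \<in> A" "b \<in> B" for a b
  proof -
    have "a \<otimes> b \<in> A <#> B" using that unfolding set_mult_def by auto
    then have "a \<otimes> b \<in> B <#> A" using eqAB by simp
    then obtain b' a' where "b' \<in> B" "a' \<in> A" "a \<otimes> b = b' \<otimes> a'" unfolding set_mult_def by auto
    then show ?thesis using that unfolding Rel_def by auto
  qed
  have orb: "(a', inv b, a, inv b') \<in> Rel \<and> (inv a, b', inv a', b) \<in> Rel \<and> (inv a', inv b', inv a, inv b) \<in> Rel"
    if "(a,b,a',b') \<in> Rel" for a b a' b'
  proof -
    from that have m: "a \<in> A" "b \<in> B" "a' \<in> A" "b' \<in> B" and e: "a \<otimes> b = b' \<otimes> a'"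
      unfolding Rel_def by auto
    have c: "a \<in> carrier G" "b \<in> carrier G" "a' \<in> carrier G" "b' \<in> carrier G" using m AG BG by auto
    have e1: "a' \<otimes> inv b = inv b' \<otimes> a"
    proof -
      have "inv b' \<otimes> a = inv b' \<otimes> (a \<otimes> b) \<otimes> inv b" using c by (simp add: m_assoc)
      also have "\<dots> = a' \<otimes> inv b" using c e by (simp add: m_assoc[symmetric])
      finally show ?thesis by simp
    qed
    have e2: "inv a \<otimes> b' = b \<otimes> inv a'"
    proof -
      have "b \<otimes> inv a' = inv a \<otimes> (a \<otimes> b) \<otimes> inv a'" using c by (simp add: m_assoc[symmetric])
      also have "\<dots> = inv a \<otimes> b'" using c e by (simp add: m_assoc)
      finally show ?thesis by simp
    qed
    have e3: "inv a' \<otimes> inv b' = inv b \<otimes> inv a"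
      using c e by (metis inv_mult_group)
    show ?thesis using m e1 e2 e3 invA invB unfolding Rel_def by auto
  qed
  have nc: "\<not> (a' = inv a \<and> b' = inv b)" if "(a,b,a',b') \<in> Rel" for a b a' b'
  proof
    assume h: "a' = inv a \<and> b' = inv b"
    from that have m: "a \<in> A" "b \<in> B" and e: "a \<otimes> b = b' \<otimes> a'"
      unfolding Rel_def by auto
    have c: "a \<in> carrier G" "b \<in> carrier G" using m AG BG by auto
    have sq: "(a \<otimes> b) \<otimes> (a \<otimes> b) = \<one>"
    proof -
      have "a \<otimes> b = inv (a \<otimes> b)" using e h c by (simp add: inv_mult_group)
      then show ?thesis using c by (metis m_closed r_inv)
    qed
    have "(a \<otimes> b) [^] (2::nat) = \<one>" using sq c by (simp add: numeral_2_eq_2 nat_pow_mult m_assoc)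
    then have "ord (a \<otimes> b) dvd 2" using c by (simp add: pow_eq_id)
    moreover have "a \<otimes> b \<in> A <#> B" using m unfolding set_mult_def by auto
    ultimately have "ord (a \<otimes> b) = 1" using ordAB
      by (metis dvd_antisym dvd_refl nat_dvd_1_iff_1 two_is_prime_nat prime_nat_iff)
    then have one: "a \<otimes> b = \<one>" using c by (metis m_closed ord_eq_1)
    then have bi: "b = inv a" using c by (metis inv_equality l_inv m_assoc r_one inv_closed l_one)
    have "inv a \<in> A" "a \<in> B" using invA[OF m(1)] invB[OF m(2)] bi c by auto
    then have "(a, inv a) \<in> A \<times> B" "(inv a, a) \<in> A \<times> B" "a \<otimes> inv a = inv a \<otimes> a"
      using m bi c by auto
    then have "(a, inv a) = (inv a, a)" using injAB unfolding inj_on_def by fastforce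
    then show False using invA[OF m(1)] by simp
  qed
  have sqeq: "rel_square G a' (inv b) a (inv b') = rel_square G a b a' b' \<and>
      rel_square G (inv a) b' (inv a') b = rel_square G a b a' b' \<and>
      rel_square G (inv a') (inv b') (inv a) (inv b) = rel_square G a b a' b'"
    if "(a,b,a',b') \<in> Rel" for a b a' b'
  proof -
    have c: "a \<in> carrier G" "b \<in> carrier G" "a' \<in> carrier G" "b' \<in> carrier G"
      using that AG BG unfolding Rel_def by auto
    show ?thesis using c unfolding rel_square_def rel_tuple_def by auto
  qed
  define S where "S = SAB_squares G A B"
  have S_eq: "S = (\<lambda>(a,b,a',b'). rel_square G a b a' b') ` Rel"
    unfolding S_def SAB_squares_def Rel_def by force
  have finRel: "finite Rel"
  proof -
    have "Rel \<subseteq> A \<times> B \<times> A \<times> B" unfolding Rel_def by auto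
    then show ?thesis using fA fB finite_subset by blast
  qed
  have finS: "finite S" using S_eq finRel by simp
  define g where "g s = {(x,y). \<exists>z w. (Inl x, Inr y, z, w) \<in> s}" for s :: "('a + 'a) tuple4 set"
  have G1: "g (rel_square G a b a' b') = {(a,b),(a', inv b),(inv a, b'),(inv a', inv b')}" for a b a' b'
    unfolding g_def rel_square_def rel_tuple_def by auto
  have Rep: "\<exists>x' y'. (x,y,x',y') \<in> Rel \<and> s = rel_square G x y x' y'"
    if "s \<in> S" "(x,y) \<in> g s" for s x y
  proof -
    from that(1) obtain a b a' b' where r: "(a,b,a',b') \<in> Rel" and s: "s = rel_square G a b a' b'"
      unfolding S_eq by auto
    from that(2) have "(x,y) \<in> {(a,b),(a', inv b),(inv a, b'),(inv a', inv b')}" using s G1 by simp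
    then consider "x = a" "y = b" | "x = a'" "y = inv b" | "x = inv a" "y = b'"
      | "x = inv a'" "y = inv b'" by blast
    then show ?thesis
    proof cases
      case 1 then show ?thesis using r s by blast
    next
      case 2 then show ?thesis using orb[OF r] sqeq[OF r] s by metis
    next
      case 3 then show ?thesis using orb[OF r] sqeq[OF r] s by metis
    next
      case 4 then show ?thesis using orb[OF r] sqeq[OF r] s by metis
    qed
  qed
  have disj: "s1 = s2" if h: "s1 \<in> S" "s2 \<in> S" "r \<in> g s1" "r \<in> g s2" for s1 s2 r
  proof -
    obtain x y where r: "r = (x,y)" by (cases r)
    obtain x1 y1 where 1: "(x,y,x1,y1) \<in> Rel" "s1 = rel_square G x y x1 y1"
      using Rep[OF h(1)] h(3) r by blast
    obtain x2 y2 where 2: "(x,y,x2,y2) \<in> Rel" "s2 = rel_square G x y x2 y2"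
      using Rep[OF h(2)] h(4) r by blast
    show ?thesis using U[OF 1(1) 2(1)] 1 2 by simp
  qed
  have Un: "(\<Union>s\<in>S. g s) = A \<times> B"
  proof
    show "(\<Union>s\<in>S. g s) \<subseteq> A \<times> B"
    proof
      fix r assume "r \<in> (\<Union>s\<in>S. g s)"
      then obtain s where "s \<in> S" "r \<in> g s" by auto
      then show "r \<in> A \<times> B" using Rep[of s "fst r" "snd r"] unfolding Rel_def by (auto simp: mem_Times_iff)
    qed
    show "A \<times> B \<subseteq> (\<Union>s\<in>S. g s)"
    proof
      fix r assume "r \<in> A \<times> B"
      then obtain a b where ab: "r = (a,b)" "a \<in> A" "b \<in> B" by auto
      then obtain a' b' where r: "(a,b,a',b') \<in> Rel" using Ex by blast
      then have "rel_square G a b a' b' \<in> S" unfolding S_eq by force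
      moreover have "r \<in> g (rel_square G a b a' b')" using G1 ab by simp
      ultimately show "r \<in> (\<Union>s\<in>S. g s)" by blast
    qed
  qed
  define e where "e r = {#Inl (inv (fst r)), Inr (snd r)#}" for r :: "'a \<times> 'a"
  have corners: "tuple_corners G (SOME t. t \<in> s) = (\<Sum>r\<in>g s. {#e r#})" if "s \<in> S" for s
  proof -
    from that obtain a b a' b' where r: "(a,b,a',b') \<in> Rel" and s: "s = rel_square G a b a' b'"
      unfolding S_eq by auto
    have m: "a \<in> A" "b \<in> B" "a' \<in> A" "b' \<in> B" using r unfolding Rel_def by auto
    have c: "a \<in> carrier G" "b \<in> carrier G" "a' \<in> carrier G" "b' \<in> carrier G" using m AG BG by auto
    define C where "C = {# {#Inl (inv a), Inr b#}, {#Inr (inv b), Inl (inv a')#},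
        {#Inl a', Inr (inv b')#}, {#Inr b', Inl a#} #}"
    have tc: "tuple_corners G t = C" if "t \<in> s" for t
      using that c unfolding s rel_square_def rel_tuple_def C_def
      by (auto simp: add_mset_commute)
    have "(SOME t. t \<in> s) \<in> s" unfolding s rel_square_def by (rule someI[of _ "rel_tuple G a b a' b'"]) simp
    then have 1: "tuple_corners G (SOME t. t \<in> s) = C" by (rule tc)
    have d1: "inv a \<noteq> a" "inv b \<noteq> b" "inv a' \<noteq> a'" "inv b' \<noteq> b'" using invA invB m by auto
    have d2: "\<not> (a' = inv a \<and> b' = inv b)" using nc[OF r] .
    have d3: "a = inv a' \<longleftrightarrow> a' = inv a" "b = inv b' \<longleftrightarrow> b' = inv b"
      using c by (metis inv_inv)+
    have "(\<Sum>r\<in>g s. {#e r#}) = C"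
      unfolding s G1 using d1 d2 d3 c
      by (auto simp: e_def C_def add_mset_commute)
    then show ?thesis using 1 by simp
  qed
  have "snd (SAB_link G A B) = (\<Sum>s\<in>S. \<Sum>r\<in>g s. {#e r#})"
    unfolding SAB_link_def S_def[symmetric] using corners by simp
  also have "\<dots> = (\<Sum>r\<in>(\<Union>s\<in>S. g s). {#e r#})"
  proof (rule sum.UNION_disjoint[symmetric])
    show "finite S" by (rule finS)
    show "\<forall>s\<in>S. finite (g s)" unfolding S_eq using G1 by auto
    show "\<forall>s1\<in>S. \<forall>s2\<in>S. s1 \<noteq> s2 \<longrightarrow> g s1 \<inter> g s2 = {}" using disj by blast
  qed
  also have "\<dots> = (\<Sum>r\<in>A \<times> B. {#e r#})" using Un by simp
  also have "\<dots> = (\<Sum>x\<in>e ` (A \<times> B). {#x#})"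
  proof (rule sum.reindex[symmetric, unfolded comp_def])
    show "inj_on e (A \<times> B)"
    proof (rule inj_onI)
      fix r1 r2 assume "r1 \<in> A \<times> B" "r2 \<in> A \<times> B" "e r1 = e r2"
      then show "r1 = r2" using AG BG unfolding e_def
        by (cases r1, cases r2) (auto simp: add_eq_conv_ex subset_iff dest: inj_onD[OF inv_inj])
    qed
  qed
  also have "\<dots> = mset_set (e ` (A \<times> B))" by simp
  also have "e ` (A \<times> B) = {{#Inl a, Inr b#} | a b. a \<in> A \<and> b \<in> B}"
  proof
    show "e ` (A \<times> B) \<subseteq> {{#Inl a, Inr b#} | a b. a \<in> A \<and> b \<in> B}"
      unfolding e_def using invA by force
    show "{{#Inl a, Inr b#} | a b. a \<in> A \<and> b \<in> B} \<subseteq> e ` (A \<times> B)"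
    proof
      fix x assume "x \<in> {{#Inl a, Inr b#} | a b. a \<in> A \<and> b \<in> B}"
      then obtain a b where x: "x = {#Inl a, Inr b#}" "a \<in> A" "b \<in> B" by auto
      then have "x = e (inv a, b)" "(inv a, b) \<in> A \<times> B" unfolding e_def using invA AG by auto
      then show "x \<in> e ` (A \<times> B)" by blast
    qed
  qed
  finally have "snd (SAB_link G A B) = snd (complete_bipartite A B)"
    unfolding complete_bipartite_def by simp
  moreover have "fst (SAB_link G A B) = fst (complete_bipartite A B)"
    unfolding complete_bipartite_def SAB_link_def by simp
  ultimately show ?thesis by (simp add: prod_eq_iff)
qed

theorem lemma1:
  fixes G :: "('a, 'b) monoid_scheme" and A B :: "'a set"
  assumes "group G"
    and "VH_structure G A B"
  shows "SAB_link G A B = complete_bipartite A B"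
  using group.main[OF assms] .

end
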